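(* Let $\sigma$ be any satisfaction function, i.e., any assignment that gives, for every participatory budgeting instance $I=\langle P,c,b\rangle$, a function $\sigma: 2^{P}\to\mathbb{R}_{\geq 0}$ that is inclusion-monotonic ($\sigma(Q)\geq\sigma(Q')$ whenever $Q'\subseteq Q\subseteq P$) and satisfies $\sigma(Q)=0$ if and only if $Q=\emptyset$. Then there exist a participatory budgeting instance $I=\langle P,c,b\rangle$ and a profile $\mathbf{A}=(A_1,\ldots,A_n)$ of approval ballots such that no feasible budget allocation $\pi\subseteq P$ with $c(\pi)\leq b$ satisfies strong extended justified representation for $\sigma$ (Strong-EJR$[\sigma]$).
   Context: A participatory budgeting instance is a triple $I=\langle P,c,b\rangle$ where $P$ is a finite set of projects, $c:P\to\mathbb{R}_{>0}$ is a cost function, and $b\in\mathbb{R}_{>0}$ is the budget limit, with $c(p)\leq b$ for all $p\in P$; for $Q\subseteq P$ write $c(Q)=\sum_{p\in Q}c(p)$. A feasible budget allocation is a set $\pi\subseteq P$ with $c(\pi)\leq b$. There is a set of voters $N=\{1,\ldots,n\}$; an approval ballot of voter $i$ is a function $A_i:P\to\{0,1\}$ ($A_i(p)=1$ means $i$ approves $p$), and a profile is $\mathbf{A}=(A_1,\ldots,A_n)$. For a satisfaction function $\sigma$, the satisfaction of voter $i$ for a set $Q\subseteq P$ is $\sigma_i(Q)=\sigma(\{p\in Q: A_i(p)=1\})$. For $Q\subseteq P$, a non-empty group of voters $S\subseteq N$ is $Q$-cohesive if every voter in $S$ approves every project in $Q$ and $\frac{|S|}{n}\cdot b\geq c(Q)$.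 A feasible budget allocation $\pi$ satisfies Strong-EJR$[\sigma]$ if for every $Q\subseteq P$ and every $Q$-cohesive group $S$, we have $\sigma_i(\pi)\geq\sigma_i(Q)$ for all $i\in S$. *)

theory Defs
  imports Complex_Main
begin

definition pb_instance :: "nat set \<Rightarrow> (nat \<Rightarrow> real) \<Rightarrow> real \<Rightarrow> bool" where
  "pb_instance P c b \<longleftrightarrow> finite P \<and> (\<forall>p\<in>P. c p > 0) \<and> b > 0 \<and> (\<forall>p\<in>P. c p \<le> b)"

definition cost :: "(nat \<Rightarrow> real) \<Rightarrow> nat set \<Rightarrow> real" where
  "cost c Q = (\<Sum>p\<in>Q. c p)"

definition feasible :: "nat set \<Rightarrow> (nat \<Rightarrow> real) \<Rightarrow> real \<Rightarrow> nat set \<Rightarrow> bool" where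
  "feasible P c b \<pi> \<longleftrightarrow> \<pi> \<subseteq> P \<and> cost c \<pi> \<le> b"

definition satisfaction_function ::
  "(nat set \<Rightarrow> (nat \<Rightarrow> real) \<Rightarrow> real \<Rightarrow> nat set \<Rightarrow> real) \<Rightarrow> bool" where
  "satisfaction_function \<sigma> \<longleftrightarrow>
     (\<forall>P c b. pb_instance P c b \<longrightarrow>
        (\<forall>Q Q'. Q' \<subseteq> Q \<and> Q \<subseteq> P \<longrightarrow> \<sigma> P c b Q' \<le> \<sigma> P c b Q) \<and>
        (\<forall>Q. Q \<subseteq> P \<longrightarrow> \<sigma> P c b Q \<ge> 0 \<and> (\<sigma> P c b Q = 0 \<longleftrightarrow> Q = {})))"

text \<open>Voters are 1..n; A i p means voter i approves project p.\<close>
definition cohesive ::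
  "nat \<Rightarrow> (nat \<Rightarrow> nat \<Rightarrow> bool) \<Rightarrow> nat set \<Rightarrow> (nat \<Rightarrow> real) \<Rightarrow> real \<Rightarrow> nat set \<Rightarrow> nat set \<Rightarrow> bool" where
  "cohesive n A P c b Q S \<longleftrightarrow>
     Q \<subseteq> P \<and> S \<noteq> {} \<and> S \<subseteq> {1..n} \<and> (\<forall>i\<in>S. \<forall>p\<in>Q. A i p) \<and>
     real (card S) / real n * b \<ge> cost c Q"

definition strong_EJR ::
  "(nat set \<Rightarrow> (nat \<Rightarrow> real) \<Rightarrow> real \<Rightarrow> nat set \<Rightarrow> real) \<Rightarrow>
   nat \<Rightarrow> (nat \<Rightarrow> nat \<Rightarrow> bool) \<Rightarrow> nat set \<Rightarrow> (nat \<Rightarrow> real) \<Rightarrow> real \<Rightarrow> nat set \<Rightarrow> bool" where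
  "strong_EJR \<sigma> n A P c b \<pi> \<longleftrightarrow>
     (\<forall>Q S. cohesive n A P c b Q S \<longrightarrow>
        (\<forall>i\<in>S. \<sigma> P c b {p\<in>\<pi>. A i p} \<ge> \<sigma> P c b {p\<in>Q. A i p}))"

end

theory Submission
  imports Defs
begin

theorem mainTheorem1:
  fixes \<sigma> :: "nat set \<Rightarrow> (nat \<Rightarrow> real) \<Rightarrow> real \<Rightarrow> nat set \<Rightarrow> real"
  assumes "satisfaction_function \<sigma>"
  shows "\<exists>P c b n A. pb_instance P c b \<and> n \<ge> 1 \<and>
           \<not> (\<exists>\<pi>. feasible P c b \<pi> \<and> strong_EJR \<sigma> n A P c b \<pi>)"
proof -
  define P :: "nat set" where "P = {0,1,2}"
  define c :: "nat \<Rightarrow> real" where "c = (\<lambda>_. 2/3)"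
  define A :: "nat \<Rightarrow> nat \<Rightarrow> bool" where "A = (\<lambda>i p. p \<noteq> i mod 3)"
  have inst: "pb_instance P c 1" unfolding pb_instance_def P_def c_def by auto
  have spa: "\<forall>Q. Q \<subseteq> P \<longrightarrow> \<sigma> P c 1 Q \<ge> 0 \<and> (\<sigma> P c 1 Q = 0 \<longleftrightarrow> Q = {})"
    using assms inst unfolding satisfaction_function_def by simp
  have sp: "\<And>Q. Q \<subseteq> P \<Longrightarrow> \<sigma> P c 1 Q = 0 \<longleftrightarrow> Q = {}"
    and sp0: "\<And>Q. Q \<subseteq> P \<Longrightarrow> \<sigma> P c 1 Q \<ge> 0" using spa by auto
  have "\<not> (\<exists>\<pi>. feasible P c 1 \<pi> \<and> strong_EJR \<sigma> 3 A P c 1 \<pi>)"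
  proof
    assume "\<exists>\<pi>. feasible P c 1 \<pi> \<and> strong_EJR \<sigma> 3 A P c 1 \<pi>"
    then obtain \<pi> where f: "feasible P c 1 \<pi>" and s: "strong_EJR \<sigma> 3 A P c 1 \<pi>" by blast
    have sub: "\<pi> \<subseteq> P" using f unfolding feasible_def by auto
    have fin: "finite \<pi>" using sub unfolding P_def by (auto intro: finite_subset)
    have "cost c \<pi> = 2/3 * card \<pi>" unfolding cost_def c_def by simp
    then have "card \<pi> \<le> 1" using f unfolding feasible_def by auto
    then have "\<pi> = {} \<or> (\<exists>p. \<pi> = {p})"
      using fin by (metis card_0_eq card_1_singletonE le_eq_less_or_eq less_one)
    then have cases: "\<pi> = {} \<or> \<pi> = {0} \<or> \<pi> = {1} \<or> \<pi> = {2}" using sub unfolding P_def by auto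
    have key: "\<And>q S i. cohesive 3 A P c 1 {q} S \<Longrightarrow> i \<in> S \<Longrightarrow> {p\<in>\<pi>. A i p} = {} \<Longrightarrow> False"
    proof -
      fix q S i assume co: "cohesive 3 A P c 1 {q} S" and iS: "i \<in> S" and e: "{p\<in>\<pi>. A i p} = {}"
      have "\<sigma> P c 1 {p\<in>\<pi>. A i p} \<ge> \<sigma> P c 1 {p\<in>{q}. A i p}"
        using s co iS unfolding strong_EJR_def by blast
      moreover have "{p\<in>{q}. A i p} = {q}" using co iS unfolding cohesive_def by auto
      moreover have "q \<in> P" using co unfolding cohesive_def by auto
      moreover have "\<sigma> P c 1 {q} \<ge> 0" using sp0 \<open>q \<in> P\<close> by simp
      moreover have "\<sigma> P c 1 {q} \<noteq> 0" using sp[of "{q}"] \<open>q \<in> P\<close> by simp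
      moreover have "\<sigma> P c 1 {} = 0" using sp[of "{}"] by simp
      ultimately show False using e by simp
    qed
    have c0: "cohesive 3 A P c 1 {0} {1,2}"
      unfolding cohesive_def A_def P_def c_def cost_def by auto
    have c1: "cohesive 3 A P c 1 {1} {2,3}"
      unfolding cohesive_def A_def P_def c_def cost_def by auto
    show False using cases
    proof (elim disjE)
      assume "\<pi> = {}" then show False using key[OF c0, of 1] by auto
    next
      assume "\<pi> = {0}" then show False using key[OF c1, of 3] by (auto simp: A_def)
    next
      assume "\<pi> = {1}" then show False using key[OF c0, of 1] by (auto simp: A_def)
    next
      assume "\<pi> = {2}" then show False using key[OF c0, of 2] by (auto simp: A_def)
    qed
  qed
  then show ?thesis using inst by (intro exI[of _ P] exI[of _ c] exI[of _ 1] exI[of _ 3] exI[of _ A]) auto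
qed

end
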